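(* Let $m\ge1$ and let $u=u_1\cdots u_r$ and $v=v_1\cdots v_s$ be weakly increasing words with letters in $[m]=\{1,\dots,m\}$, with $r\le s$. Let $c=(\text{length of the first row of }P(uv))-s$. Then for every $k\ge1$, $$v^{(k)}_t<u^{(k)}_{t+c}\quad\text{for all } t\in[rk-c],$$ where $x_t$ denotes the $t$-th letter of a word $x$.
   Context: $P(w)$ is the Robinson–Schensted row-insertion tableau of the word $w$, and $uv$ is concatenation. For a word $x=x_1\cdots x_n$, $x+m=(x_1+m)\cdots(x_n+m)$, and $x^{(k)}=x\,(x+m)\,(x+2m)\cdots(x+(k-1)m)$ (concatenation, with the given $m$). *)

theory Defs
  imports Main
begin

fun row_insert :: "nat \<Rightarrow> nat list \<Rightarrow> nat list \<times> nat option" where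
  "row_insert x [] = ([x], None)"
| "row_insert x (y # ys) =
     (if x < y then (x # ys, Some y)
      else (let (ys', b) = row_insert x ys in (y # ys', b)))"

fun tab_insert :: "nat \<Rightarrow> nat list list \<Rightarrow> nat list list" where
  "tab_insert x [] = [[x]]"
| "tab_insert x (row # rows) =
     (case row_insert x row of
        (row', None) \<Rightarrow> row' # rows
      | (row', Some y) \<Rightarrow> row' # tab_insert y rows)"

definition P_tab :: "nat list \<Rightarrow> nat list list" where
  "P_tab w = fold tab_insert w []"

definition first_row_length :: "nat list list \<Rightarrow> nat" where
  "first_row_length T = (case T of [] \<Rightarrow> 0 | row # _ \<Rightarrow> length row)"

definition shift_word :: "nat list \<Rightarrow> nat \<Rightarrow> nat list" where
  "shift_word x j = map (\<lambda>a. a + j) x"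

definition power_word :: "nat \<Rightarrow> nat list \<Rightarrow> nat \<Rightarrow> nat list" where
  "power_word m x k = concat (map (\<lambda>i. shift_word x (i * m)) [0..<k])"

end

theory Submission
  imports Defs
begin

definition ins :: "nat \<Rightarrow> nat list \<Rightarrow> nat list" where
  "ins x r = fst (row_insert x r)"

definition fr :: "nat list list \<Rightarrow> nat list" where
  "fr T = (case T of [] \<Rightarrow> [] | r # _ \<Rightarrow> r)"

lemma fr_tab: "fr (tab_insert x T) = ins x (fr T)"
  by (cases T) (auto simp: fr_def ins_def split: option.splits prod.splits)

lemma fr_fold: "fr (fold tab_insert w T) = fold ins w (fr T)"
  by (induction w arbitrary: T) (auto simp: fr_tab)

lemma frl: "first_row_length T = length (fr T)"
  by (cases T) (auto simp: first_row_length_def fr_def)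

lemma ins_app: "(\<forall>y\<in>set r. y \<le> x) \<Longrightarrow> row_insert x r = (r @ [x], None)"
  by (induction r) auto

lemma fold_ins_sorted: "sorted u \<Longrightarrow> fold ins u [] = u"
proof (induction u rule: rev_induct)
  case Nil then show ?case by simp
next
  case (snoc x u)
  then show ?case by (simp add: sorted_append ins_def ins_app)
qed

lemma ins_len: "length (fst (row_insert x r)) \<ge> length r"
  by (induction r) (auto split: prod.splits)

lemma ins_set: "set (fst (row_insert x r)) \<subseteq> insert x (set r)"
  by (induction r) (auto split: prod.splits)

lemma ins_sorted: "sorted r \<Longrightarrow> sorted (fst (row_insert x r))"
proof (induction r)
  case Nil then show ?case by simp
next
  case (Cons y ys)
  show ?case
  proof (cases "x < y")
    case True then show ?thesis using Cons.prems by auto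
  next
    case False
    obtain ys' b where e: "row_insert x ys = (ys', b)" by fastforce
    have "sorted ys'" using Cons e by simp
    moreover have "\<forall>z\<in>set ys'. y \<le> z" using ins_set[of x ys] e Cons.prems False by auto
    ultimately show ?thesis using False e by simp
  qed
qed

lemma ins_le: "i < length r \<Longrightarrow> fst (row_insert x r) ! i \<le> r ! i"
proof (induction r arbitrary: i)
  case Nil then show ?case by simp
next
  case (Cons y ys)
  obtain ys' b where e: "row_insert x ys = (ys', b)" by fastforce
  show ?case using Cons e by (cases i) (auto simp: nth_Cons')
qed

lemma ins_ext: "sorted r \<Longrightarrow> L \<le> length r \<Longrightarrow> (L = 0 \<or> r ! (L - 1) \<le> x) \<Longrightarrow>
  L < length (fst (row_insert x r)) \<and> fst (row_insert x r) ! L \<le> x"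
proof (induction r arbitrary: L)
  case Nil then show ?case by simp
next
  case (Cons y ys)
  obtain ys' b where e: "row_insert x ys = (ys', b)" by fastforce
  show ?case
  proof (cases "x < y")
    case True
    have "L = 0"
    proof (rule ccontr)
      assume "L \<noteq> 0"
      then obtain L' where L': "L = Suc L'" by (cases L) auto
      show False
      proof (cases L')
        case 0 then show ?thesis using Cons.prems L' True by simp
      next
        case (Suc L'')
        then have "ys ! L'' \<le> x" "L'' < length ys" using Cons.prems L' by auto
        moreover have "y \<le> ys ! L''" using Cons.prems(1) \<open>L'' < length ys\<close> by auto
        ultimately show ?thesis using True by simp
      qed
    qed
    then show ?thesis using True by simp
  next
    case False
    show ?thesis
    proof (cases L)
      case 0
      then show ?thesis using False e by simp
    next
      case (Suc L')
      have "L' \<le> length ys" using Cons.prems Suc by simp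
      moreover have "L' = 0 \<or> ys ! (L' - 1) \<le> x"
        using Cons.prems Suc by (cases L') auto
      ultimately have "L' < length ys' \<and> ys' ! L' \<le> x"
        using Cons.IH[of L'] Cons.prems e by auto
      then show ?thesis using False e Suc by simp
    qed
  qed
qed

definition Q :: "nat list \<Rightarrow> nat \<Rightarrow> nat \<Rightarrow> bool" where
  "Q r L y = (L \<le> length r \<and> (L = 0 \<or> r ! (L - 1) \<le> y))"

lemma QA: "Q r L y \<Longrightarrow> Q (ins x r) L y"
  unfolding Q_def ins_def
  using ins_len[of r x] ins_le[of "L - 1" r x] by fastforce

lemma QB: "sorted r \<Longrightarrow> Q r L y \<Longrightarrow> y \<le> x \<Longrightarrow> Q (ins x r) (Suc L) x"
  unfolding Q_def ins_def
  using ins_ext[of r L x] by (auto simp: Suc_le_eq)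

lemma fold_sorted: "sorted r \<Longrightarrow> sorted (fold ins w r)"
  by (induction w arbitrary: r) (auto simp: ins_def ins_sorted)

lemma QC: "sorted w \<Longrightarrow> sorted r \<Longrightarrow> Q r L y \<Longrightarrow>
  L + length (filter (\<lambda>x. y \<le> x) w) \<le> length (fold ins w r)"
proof (induction w arbitrary: r L y)
  case Nil then show ?case by (simp add: Q_def)
next
  case (Cons x w)
  show ?case
  proof (cases "y \<le> x")
    case True
    have "Q (ins x r) (Suc L) x" using QB Cons True by blast
    moreover have "sorted (ins x r)" using Cons by (simp add: ins_def ins_sorted)
    ultimately have "Suc L + length (filter (\<lambda>z. x \<le> z) w) \<le> length (fold ins w (ins x r))"
      using Cons.IH[of "ins x r" "Suc L" x] Cons.prems(1) by auto
    moreover have "filter (\<lambda>z. x \<le> z) w = w" "filter (\<lambda>z. y \<le> z) w = w"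
      using Cons.prems(1) True by (auto simp: filter_id_conv intro: order_trans)
    ultimately show ?thesis using True by simp
  next
    case False
    have "Q (ins x r) L y" using QA Cons by blast
    moreover have "sorted (ins x r)" using Cons by (simp add: ins_def ins_sorted)
    ultimately show ?thesis using Cons False by auto
  qed
qed

lemma pw_suc: "power_word m x (Suc k) = power_word m x k @ shift_word x (k * m)"
  by (simp add: power_word_def)

lemma pw_len: "length (power_word m x k) = k * length x"
  by (induction k) (auto simp: pw_suc shift_word_def power_word_def)

lemma pw_nth: "n < k * length x \<Longrightarrow>
  power_word m x k ! n = x ! (n mod length x) + (n div length x) * m"
proof (induction k)
  case 0 then show ?case by simp
next
  case (Suc k)
  show ?case
  proof (cases "n < k * length x")
    case True then show ?thesis using Suc by (simp add: pw_suc nth_append pw_len)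
  next
    case False
    have lp: "length x > 0" using Suc.prems by (cases "length x") auto
    define j where "j = n - k * length x"
    have j: "n = k * length x + j" "j < length x" using False Suc.prems unfolding j_def
      by auto
    have "n div length x = k" "n mod length x = j" using j lp by auto
    then show ?thesis using j False by (simp add: pw_suc nth_append pw_len shift_word_def)
  qed
qed

lemma filt_lt: "sorted v \<Longrightarrow> j < length (filter (\<lambda>x. x < y) v) \<Longrightarrow> v ! j < y"
proof (induction v arbitrary: j)
  case Nil then show ?case by simp
next
  case (Cons x v)
  show ?case
  proof (cases "x < y")
    case True then show ?thesis using Cons by (cases j) auto
  next
    case False
    then have "filter (\<lambda>z. z < y) (x # v) = []" using Cons.prems(1)
      by (auto simp: filter_empty_conv)
    then show ?thesis using Cons.prems by simp
  qed
qed

theorem mainTheorem7: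
  fixes m k :: nat and u v :: "nat list"
  assumes "m \<ge> 1"
    and "sorted u" and "sorted v"
    and "set u \<subseteq> {1..m}" and "set v \<subseteq> {1..m}"
    and "length u \<le> length v"
    and "k \<ge> 1"
  shows "let c = int (first_row_length (P_tab (u @ v))) - int (length v) in
         \<forall>t::nat. 1 \<le> t \<and> int t \<le> int (length u * k) - c \<longrightarrow>
           power_word m v k ! (t - 1) < power_word m u k ! nat (int t + c - 1)"
proof -
  define L where "L = first_row_length (P_tab (u @ v))"
  define r where "r = length u"
  define s where "s = length v"
  have LL: "L = length (fold ins v u)"
    unfolding L_def frl P_tab_def fr_fold
    by (simp add: fr_def fold_ins_sorted assms(2) fr_fold[of "u@v", simplified, symmetric])
  have Ls: "s \<le> L"
    using QC[OF assms(3) assms(2), of 0 0] by (simp add: LL Q_def s_def)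
  define cn where "cn = L - s"
  have H: "i + 1 \<le> cn + length (filter (\<lambda>x. x < u ! i) v)" if "i < r" for i
  proof -
    have "Q u (Suc i) (u ! i)" using that by (simp add: Q_def r_def)
    then have "Suc i + length (filter (\<lambda>x. u ! i \<le> x) v) \<le> L"
      using QC[OF assms(3) assms(2)] LL by fastforce
    moreover have "length (filter (\<lambda>x. u ! i \<le> x) v) + length (filter (\<lambda>x. x < u ! i) v) = s"
      using sum_length_filter_compl[of "\<lambda>x. x < u ! i" v] by (simp add: s_def not_less)
    ultimately show ?thesis unfolding cn_def using Ls by linarith
  qed
  show ?thesis unfolding Let_def L_def[symmetric] r_def[symmetric] s_def[symmetric]
  proof (intro allI impI)
    fix t :: nat assume t: "1 \<le> t \<and> int t \<le> int (r * k) - (int L - int s)"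
    have idx: "nat (int t + (int L - int s) - 1) = t + cn - 1" using Ls t unfolding cn_def by auto
    have tb: "t + cn \<le> r * k" using t Ls unfolding cn_def by linarith
    have rpos: "r > 0" using tb t by (cases r) auto
    have spos: "s > 0" using rpos assms(6) unfolding r_def s_def by linarith
    define n where "n = t + cn - 1"
    define p where "p = t - 1"
    have tb': "t + cn \<le> k * r" using tb by (simp add: mult.commute)
    have nlt: "n < k * r" using tb' t unfolding n_def by linarith
    have krs: "k * r \<le> k * s" using assms(6) unfolding r_def s_def by simp
    have plt: "p < k * s" using nlt krs t unfolding p_def n_def by linarith
    define a where "a = n div r"
    define i where "i = n mod r"
    have ir: "i < r" using rpos i_def by simp
    have na: "n = a * r + i" using a_def i_def by simp
    define f where "f = length (filter (\<lambda>x. x < u ! i) v)"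
    have Hi: "i + 1 \<le> cn + f" using H[OF ir] f_def by simp
    have pn: "p + cn = n" using t p_def n_def by simp
    have ar: "a * r \<le> a * s" using assms(6) r_def s_def by simp
    have fs: "f \<le> s" unfolding f_def s_def by simp
    have u1: "1 \<le> u ! i" and um: "u ! i \<le> m" using assms(4) ir r_def
      by (auto dest!: nth_mem[of i u])
    have RHS: "power_word m u k ! n = u ! i + a * m"
      using pw_nth[of n k u m] nlt a_def i_def r_def by (simp add: mult.commute)
    have LHS: "power_word m v k ! p = v ! (p mod s) + (p div s) * m"
      using pw_nth[of p k v m] plt s_def by (simp add: mult.commute)
    have "p mod s < length v" using spos s_def by simp
    then have "v ! (p mod s) \<in> set v" by (rule nth_mem)
    then have vm: "v ! (p mod s) \<le> m" using assms(5) by auto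
    have "v ! (p mod s) + (p div s) * m < u ! i + a * m"
    proof (cases "p < a * s")
      case True
      then have "p div s < a" using spos by (simp add: div_less_iff_less_mult)
      then have "Suc (p div s) \<le> a" by simp
      then have "Suc (p div s) * m \<le> a * m" by (rule mult_right_mono) simp
      then show ?thesis using vm u1 by simp
    next
      case False
      have p1: "p + 1 \<le> a * s + f" using pn na Hi ar by linarith
      have "p < Suc a * s" using p1 fs spos by (cases "f = s") auto
      then have "p div s = a" using False spos
        by (metis div_nat_eqI mult.commute not_less)
      moreover have "p = a * s + p mod s" using \<open>p div s = a\<close> div_mult_mod_eq[of p s]
        by (simp add: mult.commute)
      then have "p mod s < f" using p1 by linarith
      ultimately show ?thesis using filt_lt[OF assms(3)] f_def by auto
    qed
    then show "power_word m v k ! (t - 1) < power_word m u k ! nat (int t + (int L - int s) - 1)"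
      using RHS LHS idx n_def p_def by simp
  qed
qed

end
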